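(* Under the hypotheses and notation below, for every $(i,j)\in\mathbb{Z}^2\setminus\mathcal H$, $$D_{i,j}(z;t):=\sum_{n\ge0}\sum_{k\ge0}a^{[-k]}_{i,j}(n)z^kt^n=\sqrt{\Delta(z)}\;S^+_{i,j}(z;t),\qquad\text{where } S^+_{i,j}(x;t)=\sum_{k\ge0}x^kS_{i+k,j}(t).$$
   Context: $\mathcal H=\{(k,0):k\le0\}$; $A\subset\mathbb{Z}^2$ finite, symmetric ($(i,j)\in A\Rightarrow(i,-j)\in A$), with small height variations ($|j|\le1$), $A_1\ne0$, and reversal-symmetric ($(i,j)\in A\Rightarrow(-i,-j)\in A$). $a^{[k]}_{i,j}(n)$ is the number of walks $(w_0,\dots,w_n)$ with steps in $A$, $w_0=(k,0)$, $w_n=(i,j)$, and $w_m\notin\mathcal H$ for $1\le m\le n$. $S_{i,j}(t)=\sum_na^{[0]}_{i,j}(n)t^n$. With $A_0(x)=\sum_{(i,0)\in A}x^i$, $A_1(x)=\sum_{(i,1)\in A}x^i$, $\delta(x)=(1-tA_0(x))^2-4t^2A_1(x)^2$, $\Delta(x)$ is the factor with coefficients in $\mathbb{R}[x]$ of the canonical factorization $\delta=D\Delta(x)\bar\Delta(1/x)$ (unique triple of power series in $t$, $D$ real coefficients, $\bar\Delta$ coefficients in $\mathbb{R}[1/x]$, normalized by $D(0)=\Delta(0;t)=\bar\Delta(0;t)=\Delta(x;0)=\bar\Delta(1/x;0)=1$). The square root has constant term $1$. *)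

theory Defs
  imports "HOL-Computational_Algebra.Computational_Algebra"
begin

definition halfline :: "(int \<times> int) set" where
  "halfline = {(k, 0) | k. k \<le> 0}"

definition wpos :: "int \<Rightarrow> (int \<times> int) list \<Rightarrow> nat \<Rightarrow> int \<times> int" where
  "wpos k ss m = (k + sum_list (map fst (take m ss)), sum_list (map snd (take m ss)))"

text \<open>a^[k]_{i,j}(n): number of walks of length n with steps in A from (k,0) to (i,j)
  whose points w_1,...,w_n avoid H.  A walk is identified with its list of steps.\<close>
definition walk_count :: "(int \<times> int) set \<Rightarrow> int \<Rightarrow> int \<Rightarrow> int \<Rightarrow> nat \<Rightarrow> nat" where
  "walk_count A k i j n = card {ss. length ss = n \<and> set ss \<subseteq> A \<and> wpos k ss n = (i, j)
       \<and> (\<forall>m\<in>{1..n}. wpos k ss m \<notin> halfline)}"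

definition S_gf :: "(int \<times> int) set \<Rightarrow> int \<Rightarrow> int \<Rightarrow> real fps" where
  "S_gf A i j = Abs_fps (\<lambda>n. real (walk_count A 0 i j n))"

text \<open>Bivariate series in t (outer) and x (inner):  F = \<Sum>_n (\<Sum>_k c(n,k) x^k) t^n.\<close>
definition Splus :: "(int \<times> int) set \<Rightarrow> int \<Rightarrow> int \<Rightarrow> real fps fps" where
  "Splus A i j = Abs_fps (\<lambda>n. Abs_fps (\<lambda>k. fps_nth (S_gf A (i + int k) j) n))"

definition D_gf :: "(int \<times> int) set \<Rightarrow> int \<Rightarrow> int \<Rightarrow> real fps fps" where
  "D_gf A i j = Abs_fps (\<lambda>n. Abs_fps (\<lambda>k. real (walk_count A (- int k) i j n)))"

definition A0 :: "(int \<times> int) set \<Rightarrow> real fls" where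
  "A0 A = (\<Sum>i\<in>{i. (i, 0) \<in> A}. fls_X_intpow i)"

definition A1 :: "(int \<times> int) set \<Rightarrow> real fls" where
  "A1 A = (\<Sum>i\<in>{i. (i, 1) \<in> A}. fls_X_intpow i)"

definition delta :: "(int \<times> int) set \<Rightarrow> real fls fps" where
  "delta A = (1 - fps_X * fps_const (A0 A))^2 - 4 * fps_X^2 * fps_const ((A1 A)^2)"

definition fps_map :: "('a \<Rightarrow> 'b) \<Rightarrow> 'a fps \<Rightarrow> 'b fps" where
  "fps_map f F = Abs_fps (\<lambda>n. f (fps_nth F n))"

definition inv_poly_fls :: "real poly \<Rightarrow> real fls" where
  "inv_poly_fls p = (\<Sum>k\<le>degree p. fls_const (coeff p k) * fls_X_intpow (- int k))"

text \<open>Canonical factorization \<delta> = D \<Delta>(x) \<Delta>bar(1/x): D \<in> R[[t]], \<Delta> \<in> R[x][[t]],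
  \<Delta>bar \<in> R[1/x][[t]] (its polynomial coefficients are in the variable 1/x), normalized.\<close>
definition canonical_factorization ::
  "(int \<times> int) set \<Rightarrow> real fps \<Rightarrow> real poly fps \<Rightarrow> real poly fps \<Rightarrow> bool" where
  "canonical_factorization A Dc Dl Db \<longleftrightarrow>
     delta A = fps_map fls_const Dc * fps_map (\<lambda>p. fps_to_fls (fps_of_poly p)) Dl
                 * fps_map inv_poly_fls Db
     \<and> fps_nth Dc 0 = 1
     \<and> (\<forall>n. poly (fps_nth Dl n) 0 = (if n = 0 then 1 else 0))
     \<and> (\<forall>n. poly (fps_nth Db n) 0 = (if n = 0 then 1 else 0))
     \<and> fps_nth Dl 0 = 1 \<and> fps_nth Db 0 = 1"

definition fps_sqrt1 :: "'a::idom fps \<Rightarrow> 'a fps" where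
  "fps_sqrt1 F = (THE G. G * G = F \<and> fps_nth G 0 = 1)"

end

theory Submission
  imports Defs
begin

unbundle fps_syntax



lemma halfline_iff: "(i, j) \<in> halfline \<longleftrightarrow> j = 0 \<and> i \<le> 0"
  by (auto simp: halfline_def)

definition walkset :: "(int \<times> int) set \<Rightarrow> int \<Rightarrow> int \<Rightarrow> int \<Rightarrow> nat \<Rightarrow> (int \<times> int) list set" where
  "walkset A k i j n = {ss. length ss = n \<and> set ss \<subseteq> A \<and> wpos k ss n = (i, j)
       \<and> (\<forall>m\<in>{1..n}. wpos k ss m \<notin> halfline)}"

lemma walk_count_walkset: "walk_count A k i j n = card (walkset A k i j n)"
  by (simp add: walk_count_def walkset_def)

lemma walk_count_0: "walk_count A k i j 0 = (if (i, j) = (k, 0) then 1 else 0)"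
proof -
  have "walkset A k i j 0 = (if (i, j) = (k, 0) then {[]} else {})"
    by (auto simp: walkset_def wpos_def)
  then show ?thesis by (simp add: walk_count_walkset)
qed

lemma wpos_append_le: "m \<le> length ss \<Longrightarrow> wpos k (ss @ [a]) m = wpos k ss m"
  by (simp add: wpos_def)

lemma wpos_append_last: "wpos k (ss @ [a]) (Suc (length ss)) =
   (fst (wpos k ss (length ss)) + fst a, snd (wpos k ss (length ss)) + snd a)"
  by (simp add: wpos_def)

lemma finite_walkset: "finite A \<Longrightarrow> finite (walkset A k i j n)"
proof -
  assume "finite A"
  then have "finite {ss. set ss \<subseteq> A \<and> length ss = n}" by (rule finite_lists_length_eq)
  then show ?thesis by (rule rev_finite_subset) (auto simp: walkset_def)
qed

lemma walkset_Suc: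
  assumes "(i, j) \<notin> halfline"
  shows "walkset A k i j (Suc n) = (\<Union>a\<in>A. (\<lambda>ss. ss @ [a]) ` walkset A k (i - fst a) (j - snd a) n)"
proof (intro equalityI subsetI)
  fix ss assume ss: "ss \<in> walkset A k i j (Suc n)"
  then have len: "length ss = Suc n" by (simp add: walkset_def)
  then obtain ys a where ys: "ss = ys @ [a]" by (metis length_Suc_conv_rev)
  with len have ly: "length ys = n" by simp
  from ss ys have aA: "a \<in> A" and ysA: "set ys \<subseteq> A" by (auto simp: walkset_def)
  from ss have e: "wpos k ss (Suc n) = (i, j)" by (simp add: walkset_def)
  with ys ly have e2: "wpos k ys n = (i - fst a, j - snd a)"
    using wpos_append_last[of k ys a] by (cases "wpos k ys n") auto
  have av: "\<forall>m\<in>{1..n}. wpos k ys m \<notin> halfline"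
  proof
    fix m assume m: "m \<in> {1..n}"
    then have "wpos k ss m \<notin> halfline" using ss by (auto simp: walkset_def)
    with m ys ly show "wpos k ys m \<notin> halfline" using wpos_append_le[of m ys k a] by auto
  qed
  have "ys \<in> walkset A k (i - fst a) (j - snd a) n"
    using ly ysA e2 av by (simp add: walkset_def)
  with aA ys show "ss \<in> (\<Union>a\<in>A. (\<lambda>ss. ss @ [a]) ` walkset A k (i - fst a) (j - snd a) n)" by blast
next
  fix ss assume "ss \<in> (\<Union>a\<in>A. (\<lambda>ss. ss @ [a]) ` walkset A k (i - fst a) (j - snd a) n)"
  then obtain a ys where aA: "a \<in> A" and ys: "ys \<in> walkset A k (i - fst a) (j - snd a) n"
    and ss: "ss = ys @ [a]" by blast
  from ys have ly: "length ys = n" and ysA: "set ys \<subseteq> A"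
    and e: "wpos k ys n = (i - fst a, j - snd a)"
    and av: "\<forall>m\<in>{1..n}. wpos k ys m \<notin> halfline" by (auto simp: walkset_def)
  have e2: "wpos k ss (Suc n) = (i, j)" using wpos_append_last[of k ys a] ss ly e by simp
  have av2: "\<forall>m\<in>{1..Suc n}. wpos k ss m \<notin> halfline"
  proof
    fix m assume m: "m \<in> {1..Suc n}"
    show "wpos k ss m \<notin> halfline"
    proof (cases "m = Suc n")
      case True then show ?thesis using e2 assms by simp
    next
      case False
      with m have "m \<in> {1..n}" by auto
      then show ?thesis using av ss ly wpos_append_le[of m ys k a] by auto
    qed
  qed
  show "ss \<in> walkset A k i j (Suc n)"
    using ss ly ysA aA e2 av2 by (simp add: walkset_def)
qed

lemma walk_count_Suc:
  assumes "finite A"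
  shows "walk_count A k i j (Suc n) = (if (i, j) \<in> halfline then 0
           else (\<Sum>a\<in>A. walk_count A k (i - fst a) (j - snd a) n))"
proof (cases "(i, j) \<in> halfline")
  case True
  then have "walkset A k i j (Suc n) = {}"
    by (auto simp: walkset_def intro!: bexI[of _ "Suc n"])
  then show ?thesis using True by (simp add: walk_count_walkset)
next
  case False
  have "card (walkset A k i j (Suc n)) =
     (\<Sum>a\<in>A. card ((\<lambda>ss. ss @ [a]) ` walkset A k (i - fst a) (j - snd a) n))"
    unfolding walkset_Suc[OF False]
  proof (rule card_UN_disjoint)
    show "finite A" by fact
    show "\<forall>a\<in>A. finite ((\<lambda>ss. ss @ [a]) ` walkset A k (i - fst a) (j - snd a) n)"
      using finite_walkset[OF assms] by blast
    show "\<forall>a\<in>A. \<forall>b\<in>A. a \<noteq> b \<longrightarrow> (\<lambda>ss. ss @ [a]) ` walkset A k (i - fst a) (j - snd a) n \<inter>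
         (\<lambda>ss. ss @ [b]) ` walkset A k (i - fst b) (j - snd b) n = {}"
      by auto
  qed
  also have "\<dots> = (\<Sum>a\<in>A. card (walkset A k (i - fst a) (j - snd a) n))"
    by (intro sum.cong refl card_image) (auto simp: inj_on_def)
  finally show ?thesis using False by (simp add: walk_count_walkset)
qed




lemma walk_count_H:
  assumes "finite A" "(i, j) \<in> halfline"
  shows "walk_count A k i j n = (if n = 0 \<and> i = k \<and> j = 0 then 1 else 0)"
  using assms by (cases n) (auto simp: walk_count_0 walk_count_Suc halfline_iff)

locale wk =
  fixes A :: "(int \<times> int) set"
  assumes fin: "finite A"
    and symv: "\<And>a b. (a, b) \<in> A \<Longrightarrow> (a, - b) \<in> A"
    and ht: "\<And>a b. (a, b) \<in> A \<Longrightarrow> \<bar>b\<bar> \<le> 1"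
    and ex1: "\<exists>a. (a, 1) \<in> A"
begin

definition M :: int where "M = (\<Sum>a\<in>A. \<bar>fst a\<bar>)"

lemma M_bound: "a \<in> A \<Longrightarrow> \<bar>fst a\<bar> \<le> M"
  unfolding M_def using fin by (intro member_le_sum) auto

lemma M_nonneg: "0 \<le> M"
  unfolding M_def by (intro sum_nonneg) auto

lemma walk_lower: "walk_count A k i j n \<noteq> 0 \<Longrightarrow> k - int n * M \<le> i"
proof (induction n arbitrary: i j)
  case 0
  then show ?case by (simp add: walk_count_0 split: if_splits)
next
  case (Suc n)
  then have "(\<Sum>a\<in>A. walk_count A k (i - fst a) (j - snd a) n) \<noteq> 0"
    by (simp add: walk_count_Suc[OF fin] split: if_splits)
  then obtain a where a: "a \<in> A" "walk_count A k (i - fst a) (j - snd a) n \<noteq> 0"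
    by (meson sum.not_neutral_contains_not_neutral)
  from Suc.IH[OF a(2)] M_bound[OF a(1)] show ?case by (simp add: algebra_simps)
qed

definition Sl :: "int \<Rightarrow> real fls fps" where
  "Sl j = Abs_fps (\<lambda>n. Abs_fls (\<lambda>i. real (walk_count A 0 i j n)))"

lemma Sl_nth [simp]: "(Sl j $ n) $$ i = real (walk_count A 0 i j n)"
proof -
  have "Abs_fls (\<lambda>i. real (walk_count A 0 i j n)) $$ i = real (walk_count A 0 i j n)"
    by (rule nth_Abs_fls_lower_bound[where N = "- (int n * M)"])
       (use walk_lower[of 0 _ j n] in fastforce)
  then show ?thesis by (simp add: Sl_def)
qed

definition Aop :: "(int \<Rightarrow> real fls fps) \<Rightarrow> int \<Rightarrow> real fls fps" where
  "Aop F j = (\<Sum>a\<in>A. fps_const (fls_X_intpow (fst a)) * F (j - snd a))"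

lemma Aop_nth: "Aop F j $ n = (\<Sum>a\<in>A. fls_X_intpow (fst a) * (F (j - snd a) $ n))"
  by (simp add: Aop_def fps_sum_nth fps_const_mult_left)

lemma Aop_nth_nth: "(Aop F j $ n) $$ i = (\<Sum>a\<in>A. (F (j - snd a) $ n) $$ (i - fst a))"
  by (simp add: Aop_nth fls_nth_sum fls_X_intpow_times_conv_shift)

lemma Aop_mult_right: "Aop (\<lambda>j. F j * c) j = Aop F j * c"
  by (simp add: Aop_def sum_distrib_right mult.assoc)

definition npart :: "real fls \<Rightarrow> real fls" where
  "npart f = Abs_fls (\<lambda>i. if i \<le> 0 then f $$ i else 0)"

lemma npart_nth [simp]: "npart f $$ i = (if i \<le> 0 then f $$ i else 0)"
  unfolding npart_def
  by (rule nth_Abs_fls_lower_bound[where N = "fls_subdegree f"]) auto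

definition Gs :: "real fls fps" where
  "Gs = fps_X * Abs_fps (\<lambda>n. npart (Aop Sl 0 $ n))"

lemma Sl_eq: "Sl j = (if j = 0 then 1 - Gs else 0) + fps_X * Aop Sl j"
proof (rule fps_ext)
  fix n
  show "Sl j $ n = ((if j = 0 then 1 - Gs else 0) + fps_X * Aop Sl j) $ n"
  proof (cases n)
    case 0
    show ?thesis
      by (rule fls_eqI) (simp add: 0 Gs_def walk_count_0)
  next
    case (Suc m)
    show ?thesis
    proof (rule fls_eqI)
      fix i
      show "(Sl j $ n) $$ i = (((if j = 0 then 1 - Gs else 0) + fps_X * Aop Sl j) $ n) $$ i"
        by (simp add: Suc Gs_def walk_count_Suc[OF fin] Aop_nth_nth halfline_iff)
    qed
  qed
qed

lemma sys_unique:
  assumes X: "\<And>j. X j = (if j = 0 then c else 0) + fps_X * Aop X j"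
    and Y: "\<And>j. Y j = (if j = 0 then c else 0) + fps_X * Aop Y j"
  shows "X j = Y j"
proof -
  have "\<forall>j. X j $ n = Y j $ n" for n
  proof (induction n)
    case 0
    show ?case
    proof
      fix j
      have "X j $ 0 = (if j = 0 then c $ 0 else 0)" by (subst X) simp
      moreover have "Y j $ 0 = (if j = 0 then c $ 0 else 0)" by (subst Y) simp
      ultimately show "X j $ 0 = Y j $ 0" by simp
    qed
  next
    case (Suc n)
    show ?case
    proof
      fix j
      have "X j $ Suc n = (if j = 0 then c $ Suc n else 0) + Aop X j $ n" by (subst X) simp
      moreover have "Y j $ Suc n = (if j = 0 then c $ Suc n else 0) + Aop Y j $ n" by (subst Y) simp
      moreover have "Aop X j $ n = Aop Y j $ n" using Suc by (simp add: Aop_nth)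
      ultimately show "X j $ Suc n = Y j $ Suc n" by simp
    qed
  qed
  then show ?thesis by (simp add: fps_eq_iff)
qed

end



lemma fps_const_sum: "fps_const (\<Sum>x\<in>S. f x) = (\<Sum>x\<in>S. fps_const (f x))"
  by (induction S rule: infinite_finite_induct) (auto simp flip: fps_const_add)

context wk begin

lemma sum_split_snd:
  "(\<Sum>a\<in>A. f a) = (\<Sum>a\<in>{a\<in>A. snd a = 0}. f a) + (\<Sum>a\<in>{a\<in>A. snd a = 1}. f a)
      + (\<Sum>a\<in>{a\<in>A. snd a = -1}. f a)"
proof -
  have "(\<Sum>a\<in>A. f a) = (\<Sum>a\<in>A. (if snd a = 0 then f a else 0) + (if snd a = 1 then f a else 0)
      + (if snd a = -1 then f a else 0))"
  proof (rule sum.cong[OF refl])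
    fix a assume "a \<in> A"
    then have "\<bar>snd a\<bar> \<le> 1" using ht[of "fst a" "snd a"] by simp
    then have "snd a = 0 \<or> snd a = 1 \<or> snd a = -1" by auto
    then show "f a = (if snd a = 0 then f a else 0) + (if snd a = 1 then f a else 0)
      + (if snd a = -1 then f a else 0)" by auto
  qed
  also have "\<dots> = (\<Sum>a\<in>{a\<in>A. snd a = 0}. f a) + (\<Sum>a\<in>{a\<in>A. snd a = 1}. f a)
      + (\<Sum>a\<in>{a\<in>A. snd a = -1}. f a)"
    by (simp add: sum.distrib sum.inter_filter fin)
  finally show ?thesis .
qed

lemma sum_level:
  "(\<Sum>a\<in>{a\<in>A. snd a = b}. g (fst a)) = (\<Sum>i\<in>{i. (i, b) \<in> A}. g i)"
proof (rule sum.reindex_bij_witness[where i = "\<lambda>i. (i, b)" and j = fst])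
qed auto

lemma level_m1: "{i. (i, -1) \<in> A} = {i. (i, 1) \<in> A}"
  using symv by fastforce

lemma Aop_split:
  "Aop F j = fps_const (A0 A) * F j + fps_const (A1 A) * (F (j - 1) + F (j + 1))"
proof -
  have "Aop F j = (\<Sum>a\<in>{a\<in>A. snd a = 0}. fps_const (fls_X_intpow (fst a)) * F (j - snd a))
     + (\<Sum>a\<in>{a\<in>A. snd a = 1}. fps_const (fls_X_intpow (fst a)) * F (j - snd a))
     + (\<Sum>a\<in>{a\<in>A. snd a = -1}. fps_const (fls_X_intpow (fst a)) * F (j - snd a))"
    unfolding Aop_def by (rule sum_split_snd)
  also have "(\<Sum>a\<in>{a\<in>A. snd a = 0}. fps_const (fls_X_intpow (fst a)) * F (j - snd a))
      = (\<Sum>a\<in>{a\<in>A. snd a = 0}. fps_const (fls_X_intpow (fst a)) * F j)"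
    by (rule sum.cong) auto
  also have "\<dots> = fps_const (A0 A) * F j"
    using sum_level[where b=0 and g="\<lambda>i. fps_const (fls_X_intpow i) * F j"]
    by (simp add: A0_def fps_const_sum sum_distrib_right)
  also have "(\<Sum>a\<in>{a\<in>A. snd a = 1}. fps_const (fls_X_intpow (fst a)) * F (j - snd a))
      = (\<Sum>a\<in>{a\<in>A. snd a = 1}. fps_const (fls_X_intpow (fst a)) * F (j - 1))"
    by (rule sum.cong) auto
  also have "\<dots> = fps_const (A1 A) * F (j - 1)"
    using sum_level[where b=1 and g="\<lambda>i. fps_const (fls_X_intpow i) * F (j - 1)"]
    by (simp add: A1_def fps_const_sum sum_distrib_right)
  also have "(\<Sum>a\<in>{a\<in>A. snd a = -1}. fps_const (fls_X_intpow (fst a)) * F (j - snd a))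
      = (\<Sum>a\<in>{a\<in>A. snd a = -1}. fps_const (fls_X_intpow (fst a)) * F (j + 1))"
    by (rule sum.cong) auto
  also have "\<dots> = fps_const (A1 A) * F (j + 1)"
    using sum_level[where b="-1" and g="\<lambda>i. fps_const (fls_X_intpow i) * F (j + 1)"]
    by (simp add: A1_def fps_const_sum sum_distrib_right level_m1)
  finally show ?thesis by (simp add: algebra_simps)
qed

lemma A1_nonzero: "A1 A \<noteq> 0"
proof -
  obtain a where a: "(a, 1) \<in> A" using ex1 by blast
  have finS: "finite {i. (i, 1) \<in> A}"
    using finite_imageI[OF fin, of fst] by (rule rev_finite_subset) force
  have "A1 A $$ a = (\<Sum>i\<in>{i. (i, 1) \<in> A}. (if a = i then 1 else 0))"
    by (simp add: A1_def fls_nth_sum)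
  also have "\<dots> = 1" using a finS by (simp add: sum.delta)
  finally show ?thesis by auto
qed

definition K0 :: "real fls fps" where "K0 = 1 - fps_X * fps_const (A0 A)"
definition q :: "real fls fps" where "q = fps_X * fps_const (A1 A)"

lemma delta_eq: "delta A = K0^2 - 4 * q^2"
  by (simp add: delta_def K0_def q_def power_mult_distrib fps_const_power)

lemma delta0: "delta A $ 0 = 1"
  by (simp add: delta_def power2_eq_square)

definition s :: "real fls fps" where "s = fps_radical (\<lambda>_ _. 1) 2 (delta A)"

lemma s_sq: "s ^ 2 = delta A"
proof -
  have "fps_radical (\<lambda>_ _. 1) (Suc 1) (delta A) ^ Suc 1 = delta A"
    using power_radical[of "delta A" "\<lambda>_ _. 1" 1] delta0 by simp
  then show ?thesis by (simp add: s_def numeral_2_eq_2)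
qed

lemma s0: "s $ 0 = 1"
  by (simp add: s_def)

definition rho :: "real fls fps" where
  "rho = fps_shift 1 (K0 - s) * fps_const (inverse (2 * A1 A))"

lemma two_q_rho: "2 * q * rho = K0 - s"
proof -
  have e: "fps_X * fps_shift 1 (K0 - s) = K0 - s"
    by (rule fps_ext) (simp add: K0_def s0)
  have "2 * q * rho = fps_X * fps_shift 1 (K0 - s) * (fps_const (2 * A1 A) * fps_const (inverse (2 * A1 A)))"
  proof -
    have c2: "fps_const (2 * A1 A) = 2 * fps_const (A1 A)"
      by (simp add: fps_numeral_fps_const)
    show ?thesis unfolding q_def rho_def fps_const_mult[symmetric] c2 by (simp add: algebra_simps)
  qed
  also have "fps_const (2 * A1 A) * fps_const (inverse (2 * A1 A)) = 1"
    using A1_nonzero by simp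
  finally show ?thesis using e by simp
qed

lemma q_nonzero: "q \<noteq> 0"
proof
  assume "q = 0"
  then have "q $ 1 = 0" by simp
  then show False using A1_nonzero by (simp add: q_def)
qed

lemma rho_quad: "q * rho^2 - K0 * rho + q = 0"
proof -
  have "(4 * q) * (q * rho^2 - K0 * rho + q) = (2 * q * rho)^2 - 2 * K0 * (2 * q * rho) + 4 * q^2"
    by (simp add: algebra_simps power2_eq_square)
  also have "\<dots> = s^2 - K0^2 + 4 * q^2"
    unfolding two_q_rho by (simp add: algebra_simps power2_eq_square)
  also have "\<dots> = 0" using s_sq delta_eq by simp
  finally have "(4 * q) * (q * rho^2 - K0 * rho + q) = 0" .
  moreover have "4 * q \<noteq> 0" using q_nonzero by simp
  ultimately show ?thesis by simp
qed

definition W0 :: "real fls fps" where "W0 = inverse s"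

lemma W0_s: "W0 * s = 1"
  unfolding W0_def by (rule inverse_mult_eq_1) (simp add: s0)

definition U :: "int \<Rightarrow> real fls fps" where "U j = W0 * rho ^ nat \<bar>j\<bar>"

lemma U_eq: "U j = (if j = 0 then 1 else 0) + fps_X * Aop U j"
proof -
  have X0: "fps_X * fps_const (A0 A) = 1 - K0" by (simp add: K0_def)
  have main: "K0 * U j = (if j = 0 then 1 else 0) + q * (U (j - 1) + U (j + 1))"
  proof (cases "j = 0")
    case True
    have "K0 * U j = W0 * (s + 2 * q * rho)" using two_q_rho by (simp add: True U_def algebra_simps)
    also have "\<dots> = 1 + q * (U (j - 1) + U (j + 1))"
      using W0_s by (simp add: True U_def algebra_simps)
    finally show ?thesis using True by simp
  next
    case False
    define m where "m = nat \<bar>j\<bar> - 1"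
    have mj: "nat \<bar>j\<bar> = Suc m" using False by (simp add: m_def)
    have pw: "rho ^ nat \<bar>j - 1\<bar> + rho ^ nat \<bar>j + 1\<bar> = rho ^ m + rho ^ Suc (Suc m)"
    proof (cases "j > 0")
      case True
      then have e: "nat \<bar>j - 1\<bar> = m" "nat \<bar>j + 1\<bar> = Suc (Suc m)" using mj by auto
      show ?thesis by (simp only: e)
    next
      case False
      with \<open>j \<noteq> 0\<close> have e: "nat \<bar>j - 1\<bar> = Suc (Suc m)" "nat \<bar>j + 1\<bar> = m" using mj by auto
      show ?thesis unfolding e by (rule add.commute)
    qed
    have uu: "U (j - 1) + U (j + 1) = W0 * (rho ^ m + rho ^ Suc (Suc m))"
      unfolding U_def distrib_left[symmetric] pw ..
    have "K0 * U j - q * (U (j - 1) + U (j + 1)) = - W0 * rho ^ m * (q * rho^2 - K0 * rho + q)"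
      unfolding uu by (simp add: U_def mj algebra_simps power2_eq_square)
    then show ?thesis using False rho_quad by simp
  qed
  have "(if j = 0 then 1 else 0) + fps_X * Aop U j
      = (if j = 0 then 1 else 0) + (1 - K0) * U j + q * (U (j - 1) + U (j + 1))"
    by (simp add: Aop_split distrib_left mult.assoc[symmetric] X0 q_def)
  also have "\<dots> = U j" using main by (simp add: algebra_simps)
  finally show ?thesis by simp
qed

lemma Sl_U: "Sl j = U j * (1 - Gs)"
proof (rule sys_unique[of Sl "1 - Gs" "\<lambda>j. U j * (1 - Gs)"])
  show "Sl j = (if j = 0 then 1 - Gs else 0) + fps_X * Aop Sl j" for j by (rule Sl_eq)
  show "U j * (1 - Gs) = (if j = 0 then 1 - Gs else 0) + fps_X * Aop (\<lambda>j. U j * (1 - Gs)) j" for j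
  proof -
    have "U j * (1 - Gs) = ((if j = 0 then 1 else 0) + fps_X * Aop U j) * (1 - Gs)"
      using U_eq[of j] by simp
    also have "\<dots> = (if j = 0 then 1 - Gs else 0) + fps_X * (Aop U j * (1 - Gs))"
      by (simp add: distrib_right mult.assoc)
    finally show ?thesis by (simp only: Aop_mult_right)
  qed
qed

lemma P_sq_delta: "(Sl 0)^2 * delta A = (1 - Gs)^2"
proof -
  have "Sl 0 = W0 * (1 - Gs)" using Sl_U[of 0] by (simp add: U_def)
  then have "Sl 0 * s = (W0 * s) * (1 - Gs)" by (simp add: ac_simps)
  then have "Sl 0 * s = 1 - Gs" using W0_s by simp
  then have "(Sl 0 * s)^2 = (1 - Gs)^2" by simp
  then show ?thesis by (simp add: power_mult_distrib s_sq)
qed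

end



definition npos :: "real fls \<Rightarrow> bool" where "npos f \<longleftrightarrow> (\<forall>i>0. f $$ i = 0)"
definition nneg :: "real fls \<Rightarrow> bool" where "nneg f \<longleftrightarrow> (\<forall>i<0. f $$ i = 0)"

lemma npos_mult: "npos f \<Longrightarrow> npos g \<Longrightarrow> npos (f * g)"
  unfolding npos_def
proof (intro allI impI)
  fix n :: int assume f: "\<forall>i>0. f $$ i = 0" and g: "\<forall>i>0. g $$ i = 0" and n: "0 < n"
  have "(f * g) $$ n = (\<Sum>i=fls_subdegree f..n - fls_subdegree g. f $$ i * g $$ (n - i))"
    by (rule fls_times_nth(2))
  also have "\<dots> = 0"
  proof (rule sum.neutral, rule ballI)
    fix i assume "i \<in> {fls_subdegree f..n - fls_subdegree g}"
    show "f $$ i * g $$ (n - i) = 0"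
      using f g n by (cases "i > 0") auto
  qed
  finally show "(f * g) $$ n = 0" .
qed

lemma nneg_mult: "nneg f \<Longrightarrow> nneg g \<Longrightarrow> nneg (f * g)"
  unfolding nneg_def
proof (intro allI impI)
  fix n :: int assume f: "\<forall>i<0. f $$ i = 0" and g: "\<forall>i<0. g $$ i = 0" and n: "n < 0"
  have "(f * g) $$ n = (\<Sum>i=fls_subdegree f..n - fls_subdegree g. f $$ i * g $$ (n - i))"
    by (rule fls_times_nth(2))
  also have "\<dots> = 0"
  proof (rule sum.neutral, rule ballI)
    fix i assume "i \<in> {fls_subdegree f..n - fls_subdegree g}"
    show "f $$ i * g $$ (n - i) = 0"
      using f g n by (cases "i < 0") auto
  qed
  finally show "(f * g) $$ n = 0" .
qed

lemma nneg_subdeg: "nneg f \<Longrightarrow> 0 \<le> fls_subdegree f"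
  unfolding nneg_def by (rule fls_subdegree_ge0I) auto

lemma nneg_mult0: "nneg f \<Longrightarrow> nneg g \<Longrightarrow> (f * g) $$ 0 = f $$ 0 * g $$ 0"
proof -
  assume f: "nneg f" and g: "nneg g"
  have "fls_regpart (f * g) = fls_regpart f * fls_regpart g"
    by (rule fls_times_conv_regpart) (use nneg_subdeg f g in auto)
  then have "fls_regpart (f * g) $ 0 = (fls_regpart f * fls_regpart g) $ 0" by simp
  then show ?thesis by simp
qed

definition nposS :: "real fls fps \<Rightarrow> bool" where "nposS F \<longleftrightarrow> (\<forall>n. npos (F $ n))"
definition nnegS :: "real fls fps \<Rightarrow> bool" where "nnegS F \<longleftrightarrow> (\<forall>n. nneg (F $ n))"

lemma npos_sum: "(\<And>x. x \<in> S \<Longrightarrow> npos (f x)) \<Longrightarrow> npos (\<Sum>x\<in>S. f x)"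
  unfolding npos_def by (simp add: fls_nth_sum)

lemma nneg_sum: "(\<And>x. x \<in> S \<Longrightarrow> nneg (f x)) \<Longrightarrow> nneg (\<Sum>x\<in>S. f x)"
  unfolding nneg_def by (simp add: fls_nth_sum)

lemma nposS_mult: "nposS F \<Longrightarrow> nposS G \<Longrightarrow> nposS (F * G)"
  unfolding nposS_def by (auto simp: fps_mult_nth intro!: npos_sum npos_mult)

lemma nnegS_mult: "nnegS F \<Longrightarrow> nnegS G \<Longrightarrow> nnegS (F * G)"
  unfolding nnegS_def by (auto simp: fps_mult_nth intro!: nneg_sum nneg_mult)

lemma nposS_one': "nposS 1"
  unfolding nposS_def npos_def by (simp add: fps_one_nth)

lemma nnegS_one: "nnegS 1"
  unfolding nnegS_def nneg_def by (simp add: fps_one_nth)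

lemma nposS_power: "nposS F \<Longrightarrow> nposS (F ^ k)"
  by (induction k) (simp_all add: nposS_one' nposS_mult)

lemma nnegS_power: "nnegS F \<Longrightarrow> nnegS (F ^ k)"
  by (induction k) (simp_all add: nnegS_one nnegS_mult)

lemma fls_regpart_sum: "fls_regpart (\<Sum>x\<in>S. f x) = (\<Sum>x\<in>S. fls_regpart (f x))"
  by (induction S rule: infinite_finite_induct) auto

lemma nposS_diff: "nposS F \<Longrightarrow> nposS G \<Longrightarrow> nposS (F - G)"
  unfolding nposS_def npos_def by simp

lemma nposS_one: "nposS 1"
  unfolding nposS_def npos_def by (simp add: fps_one_nth)

lemma const_solve:
  assumes QE: "Q * E = N" and E0: "E $ 0 = 1" and E: "nposS E" and N: "nposS N"
  shows "npos (Q $ n)"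
proof (induction n rule: less_induct)
  case (less n)
  have "N $ n = (\<Sum>i=0..n. Q $ i * E $ (n - i))" unfolding QE[symmetric] fps_mult_nth ..
  also have "\<dots> = (\<Sum>i<n. Q $ i * E $ (n - i)) + Q $ n"
    by (simp add: atLeast0AtMost lessThan_Suc_atMost[symmetric] E0)
  finally have "Q $ n = N $ n - (\<Sum>i<n. Q $ i * E $ (n - i))" by simp
  moreover have "npos (\<Sum>i<n. Q $ i * E $ (n - i))"
    using less E by (auto intro!: npos_sum npos_mult simp: nposS_def)
  moreover have "npos (N $ n)" using N by (simp add: nposS_def)
  ultimately show ?case by (simp add: npos_def)
qed

definition c0 :: "real fls fps \<Rightarrow> real fps" where "c0 F = Abs_fps (\<lambda>n. F $ n $$ 0)"

lemma c0_nth [simp]: "c0 F $ n = F $ n $$ 0"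
  by (simp add: c0_def)

lemma c0_mult: "nnegS F \<Longrightarrow> nnegS G \<Longrightarrow> c0 (F * G) = c0 F * c0 G"
  by (rule fps_ext) (auto simp: fps_mult_nth fls_nth_sum nnegS_def nneg_mult0 intro!: sum.cong)

lemma const_one:
  assumes "nposS F" "nnegS F" "c0 F = 1"
  shows "F = 1"
proof (rule fps_ext, rule fls_eqI)
  fix n i
  show "F $ n $$ i = (1::real fls fps) $ n $$ i"
  proof (cases "i = 0")
    case True
    then show ?thesis using arg_cong[OF assms(3), of "\<lambda>F. F $ n"] by (simp add: fps_one_nth)
  next
    case False
    then show ?thesis using assms(1,2) by (cases "i > 0") (auto simp: nposS_def npos_def nnegS_def nneg_def fps_one_nth)
  qed
qed

definition psi :: "real fls fps \<Rightarrow> real fps fps" where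
  "psi F = Abs_fps (\<lambda>n. fls_regpart (F $ n))"

lemma psi_nth [simp]: "psi F $ n = fls_regpart (F $ n)"
  by (simp add: psi_def)

lemma psi_mult: "nnegS F \<Longrightarrow> nnegS G \<Longrightarrow> psi (F * G) = psi F * psi G"
  by (rule fps_ext) (auto simp: fps_mult_nth fls_regpart_sum nnegS_def nneg_subdeg fls_times_conv_regpart intro!: sum.cong)

lemma psi_one: "psi 1 = 1"
  by (rule fps_ext) (simp add: fps_one_nth)




lemma fps_map_nth [simp]: "fps_map f F $ n = f (F $ n)"
  by (simp add: fps_map_def)

lemma S_gf_nth [simp]: "S_gf A i j $ n = real (walk_count A 0 i j n)"
  by (simp add: S_gf_def)

lemma Splus_nth [simp]: "Splus A i j $ n $ k = real (walk_count A 0 (i + int k) j n)"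
  by (simp add: Splus_def)

lemma D_gf_nth [simp]: "D_gf A i j $ n $ k = real (walk_count A (- int k) i j n)"
  by (simp add: D_gf_def)

context wk begin

lemma nnegS_Sl0: "nnegS (Sl 0)"
  unfolding nnegS_def nneg_def using walk_count_H[OF fin] by (simp add: halfline_iff)

lemma c0_Sl0: "c0 (Sl 0) = 1"
  by (rule fps_ext) (simp add: walk_count_H[OF fin] halfline_iff fps_one_nth)

lemma nposS_Gs: "nposS Gs"
  unfolding nposS_def npos_def Gs_def by simp

lemma psi_Sl0: "psi (Sl 0) = Splus A 0 0"
  by (rule fps_ext, rule fps_ext) simp

lemma P_Dl:
  assumes cf: "canonical_factorization A Dc Dl Db"
  shows "Splus A 0 0 ^ 2 * fps_map fps_of_poly Dl = 1"
proof -
  define DC where "DC = fps_map fls_const Dc"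
  define DL where "DL = fps_map (\<lambda>p. fps_to_fls (fps_of_poly p)) Dl"
  define DB where "DB = fps_map inv_poly_fls Db"
  have del: "delta A = DC * DL * DB" and Dc0: "Dc $ 0 = 1"
    and Dl0: "\<And>n. poly (Dl $ n) 0 = (if n = 0 then 1 else 0)" and Db0: "Db $ 0 = 1"
    using cf by (simp_all add: canonical_factorization_def DC_def DL_def DB_def)
  have nDC: "nposS DC" unfolding nposS_def npos_def DC_def by simp
  have nDL: "nnegS DL" unfolding nnegS_def nneg_def DL_def by simp
  have nDB: "nposS DB"
    unfolding nposS_def npos_def DB_def
    by (simp add: inv_poly_fls_def fls_nth_sum)
  define E where "E = DC * DB"
  have E0: "E $ 0 = 1" by (simp add: E_def DC_def DB_def Dc0 Db0 inv_poly_fls_def)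
  have nE: "nposS E" unfolding E_def by (rule nposS_mult[OF nDC nDB])
  define Q where "Q = Sl 0 ^ 2 * DL"
  have QE: "Q * E = (1 - Gs)^2"
    using P_sq_delta unfolding del Q_def E_def by (simp add: ac_simps)
  have nN: "nposS ((1 - Gs)^2)"
    by (intro nposS_power nposS_diff nposS_one nposS_Gs)
  have pQ: "nposS Q" unfolding nposS_def using const_solve[OF QE E0 nE nN] by blast
  have nS2: "nnegS (Sl 0 ^ 2)" by (intro nnegS_power nnegS_Sl0)
  have nQ: "nnegS Q" unfolding Q_def by (rule nnegS_mult[OF nS2 nDL])
  have c0DL: "c0 DL = 1"
    by (rule fps_ext) (simp add: DL_def fps_one_nth Dl0 poly_0_coeff_0[symmetric])
  have "c0 Q = 1"
    unfolding Q_def power2_eq_square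
    using nnegS_Sl0 nDL
    by (simp add: c0_mult nnegS_mult c0_Sl0 c0DL)
  then have Q1: "Q = 1" using const_one pQ nQ by blast
  have "psi Q = psi (Sl 0) ^ 2 * psi DL"
    unfolding Q_def power2_eq_square
    using nnegS_Sl0 nDL by (simp add: psi_mult nnegS_mult)
  moreover have "psi DL = fps_map fps_of_poly Dl"
    by (rule fps_ext) (simp add: DL_def)
  ultimately show ?thesis using Q1 psi_one psi_Sl0 by simp
qed

end



lemma sqrt1_unique:
  fixes V G :: "real fps fps"
  assumes "G * G = V" "G $ 0 = 1"
  shows "fps_sqrt1 V = G"
  unfolding fps_sqrt1_def
proof (rule the_equality)
  show "G * G = V \<and> G $ 0 = 1" using assms by simp
next
  fix y assume y: "y * y = V \<and> y $ 0 = 1"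
  have "(y - G) * (y + G) = y * y - G * G" by (simp add: algebra_simps)
  also have "\<dots> = 0" using y assms(1) by simp
  finally have "(y - G) * (y + G) = 0" .
  moreover have "y + G \<noteq> 0"
  proof
    assume "y + G = 0"
    then have "(y + G) $ 0 $ 0 = 0" by simp
    moreover have "(y + G) $ 0 $ 0 = 2" using y assms(2) by simp
    ultimately show False by simp
  qed
  ultimately show "y = G" by simp
qed

context wk begin

lemma Splus_H:
  assumes "i \<le> 0"
  shows "Splus A i 0 = fps_const (fps_X ^ nat (- i)) * Splus A 0 0"
proof (rule fps_ext, rule fps_ext)
  fix n k
  show "Splus A i 0 $ n $ k = (fps_const (fps_X ^ nat (- i)) * Splus A 0 0) $ n $ k"
    using assms
    by (auto simp: fps_const_mult_left fps_X_power_mult_nth walk_count_H[OF fin] halfline_iff add.commute)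
qed

lemma Splus_rec:
  assumes "(i, j) \<notin> halfline"
  shows "Splus A i j = fps_X * (\<Sum>a\<in>A. Splus A (i - fst a) (j - snd a))"
proof (rule fps_ext, rule fps_ext)
  fix n k
  have nh: "(i + int k, j) \<notin> halfline" using assms by (auto simp: halfline_iff)
  show "Splus A i j $ n $ k = (fps_X * (\<Sum>a\<in>A. Splus A (i - fst a) (j - snd a))) $ n $ k"
  proof (cases n)
    case 0
    then show ?thesis using nh by (auto simp: walk_count_0 halfline_iff)
  next
    case (Suc m)
    then show ?thesis using nh
      by (simp add: walk_count_Suc[OF fin] fps_sum_nth algebra_simps)
  qed
qed

lemma D_H:
  assumes "i \<le> 0"
  shows "D_gf A i 0 = fps_const (fps_X ^ nat (- i))"
proof (rule fps_ext, rule fps_ext)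
  fix n k
  show "D_gf A i 0 $ n $ k = fps_const (fps_X ^ nat (- i)) $ n $ k"
    using assms by (auto simp: walk_count_H[OF fin] halfline_iff fps_X_power_nth)
qed

lemma D_rec:
  assumes "(i, j) \<notin> halfline"
  shows "D_gf A i j = fps_X * (\<Sum>a\<in>A. D_gf A (i - fst a) (j - snd a))"
proof (rule fps_ext, rule fps_ext)
  fix n k
  show "D_gf A i j $ n $ k = (fps_X * (\<Sum>a\<in>A. D_gf A (i - fst a) (j - snd a))) $ n $ k"
  proof (cases n)
    case 0
    then show ?thesis using assms by (auto simp: walk_count_0 halfline_iff)
  next
    case (Suc m)
    then show ?thesis using assms
      by (simp add: walk_count_Suc[OF fin] fps_sum_nth)
  qed
qed

lemma final:
  assumes GS: "G * Splus A 0 0 = 1"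
  shows "D_gf A i j = G * Splus A i j"
proof -
  have H: "G * Splus A i j = D_gf A i j" if h: "(i, j) \<in> halfline" for i j
  proof -
    from h have j0: "j = 0" and i0: "i \<le> 0" by (auto simp: halfline_iff)
    have "G * Splus A i j = fps_const (fps_X ^ nat (- i)) * (G * Splus A 0 0)"
      unfolding j0 Splus_H[OF i0] by (rule mult.left_commute)
    also have "\<dots> = D_gf A i j" unfolding GS j0 D_H[OF i0] by simp
    finally show ?thesis .
  qed
  have "\<forall>i j. (G * Splus A i j) $ n = D_gf A i j $ n" for n
  proof (induction n)
    case 0
    show ?case
    proof (intro allI)
      fix i j
      show "(G * Splus A i j) $ 0 = D_gf A i j $ 0"
      proof (cases "(i, j) \<in> halfline")
        case True
        then show ?thesis using H by simp
      next
        case False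
        show ?thesis by (simp add: Splus_rec[OF False] D_rec[OF False])
      qed
    qed
  next
    case (Suc n)
    show ?case
    proof (intro allI)
      fix i j
      show "(G * Splus A i j) $ Suc n = D_gf A i j $ Suc n"
      proof (cases "(i, j) \<in> halfline")
        case True
        then show ?thesis using H by simp
      next
        case False
        have "G * Splus A i j = fps_X * (\<Sum>a\<in>A. G * Splus A (i - fst a) (j - snd a))"
          unfolding Splus_rec[OF False] sum_distrib_left[symmetric] by (rule mult.left_commute)
        then have "(G * Splus A i j) $ Suc n = (\<Sum>a\<in>A. G * Splus A (i - fst a) (j - snd a)) $ n"
          by simp
        also have "\<dots> = (\<Sum>a\<in>A. D_gf A (i - fst a) (j - snd a)) $ n"
          using Suc by (simp add: fps_sum_nth)
        also have "\<dots> = D_gf A i j $ Suc n"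
          by (simp add: D_rec[OF False])
        finally show ?thesis .
      qed
    qed
  qed
  then show ?thesis by (simp add: fps_eq_iff)
qed

end

theorem mainTheorem13:
  fixes A :: "(int \<times> int) set" and Dc :: "real fps" and Dl Db :: "real poly fps"
    and i j :: int
  assumes "finite A"
    and "\<And>a b. (a, b) \<in> A \<Longrightarrow> (a, - b) \<in> A"
    and "\<And>a b. (a, b) \<in> A \<Longrightarrow> \<bar>b\<bar> \<le> 1"
    and "\<exists>a. (a, 1) \<in> A"
    and "\<And>a b. (a, b) \<in> A \<Longrightarrow> (- a, - b) \<in> A"
    and "canonical_factorization A Dc Dl Db"
    and "(i, j) \<notin> halfline"
  shows "D_gf A i j = fps_sqrt1 (fps_map fps_of_poly Dl) * Splus A i j"
proof -
  interpret wk A using assms(1-4) by unfold_locales auto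
  define V where "V = fps_map fps_of_poly Dl"
  define S where "S = Splus A 0 0"
  have VS: "S ^ 2 * V = 1" using P_Dl[OF assms(6)] by (simp add: V_def S_def)
  define G where "G = V * S"
  have Dl0: "Dl $ 0 = 1" using assms(6) by (simp add: canonical_factorization_def)
  have S0: "S $ 0 = 1"
    by (rule fps_ext) (simp add: S_def walk_count_0)
  have "G * G = V * (S ^ 2 * V)" by (simp only: G_def power2_eq_square ac_simps)
  then have "G * G = V" using VS by simp
  moreover have "G $ 0 = 1" by (simp add: G_def V_def Dl0 S0)
  ultimately have sq: "fps_sqrt1 (fps_map fps_of_poly Dl) = G"
    unfolding V_def[symmetric] by (rule sqrt1_unique)
  have "G * Splus A 0 0 = S ^ 2 * V" by (simp only: G_def S_def power2_eq_square ac_simps)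
  then have "G * Splus A 0 0 = 1" using VS by simp
  then show ?thesis unfolding sq by (rule final)
qed



end
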